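(* Let $\lambda,\mu\in P^+$ (type $C_2$). Then $$|\mathcal T^{C}_{\lambda,\mu}|=|\mathcal T^{C}_{\lambda-\varpi_1,\mu-\varpi_1}|+|{}^{1}\mathcal T^{C}_{\lambda-\varpi_2,\mu-\varpi_2}|+|{}^{2}\mathcal T^{C}_{\lambda,\mu}|.$$ Moreover, if $\min\{m_2,n_2\}>0$ then $$|{}^{2}\mathcal T^{C}_{\lambda,\mu}|=|{}^{2}\mathcal T^{C}_{\lambda-\varpi_2,\mu-\varpi_2}|+\min\{2(m_1+m_2),2(n_1+n_2),m_1+n_1\}+1,$$ and if $\min\{m_2,n_2\}=0$ and $\min\{m_1,n_1\}>0$ then $$|{}^{2}\mathcal T^{C}_{\lambda,\mu}|=|{}^{2}\mathcal T^{C}_{\lambda-\varpi_1,\mu-\varpi_1}|+\min\{n_1,m_2\}+\min\{m_1,n_2\}+1.$$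
   Context: For integral weights $\lambda,\mu$ of type $C_2$ (fundamental weights $\varpi_1,\varpi_2$, $\alpha_1$ short) write $m_i=\lambda(h_i)$, $n_i=\mu(h_i)$ (arbitrary integers; the sets below are defined by the same inequalities for all integer values, e.g. for $\lambda-\varpi_2$ replace $m_2$ by $m_2-1$). $\mathcal T^{C}_{\lambda,\mu}=\{(a,b,c,d)\in\mathbb Z_+^4: a\le m_1,\ c\le m_2,\ d\le n_2,\ b\le n_1,\ c+b-a\le m_2,\ d+b-a\le m_2,\ a+2(c-d)\le n_1,\ b+2(c-d)\le n_1\}$. ${}^{1}\mathcal T^{C}_{\lambda,\mu}$ is the (disjoint) union of $\{(0,b,c,d)\in\mathbb Z_+^4: c+b\le m_2,\ d\le n_2,\ b\le n_1,\ d+b\le m_2,\ b+2(c-d)\le n_1\}$ and $\{(a,0,c,d)\in\mathbb Z_+^4: 1\le a\le m_1,\ c\le m_2,\ d\le n_2,\ d-a\le m_2,\ a+2(c-d)\le n_1\}$. ${}^{2}\mathcal T^{C}_{\lambda,\mu}$ is the disjoint union of the four sets $\{(0,b,0,d): d\le n_2,\ b\le n_1,\ d+b\le m_2\}$, $\{(a,0,0,d): 1\le a\le m_1,\ d\le n_2,\ d-a\le m_2,\ a-2d\le n_1\}$, $\{(0,b,c,0): c\ge1,\ c+b\le m_2,\ b+2c\le n_1\}$, $\{(a,0,c,0): 1\le a\le m_1,\ 1\le c\le m_2,\ a+2c\le n_1\}$, all with entries in $\mathbb Z_+$. *)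

theory Defs
  imports Main
begin

text \<open>Weights of type C2 are encoded by their coordinates m1 = lambda(h1), m2 = lambda(h2),
  n1 = mu(h1), n2 = mu(h2), arbitrary integers. Tuples (a,b,c,d) are integer 4-tuples with
  nonnegative entries.\<close>

definition TC :: "int \<Rightarrow> int \<Rightarrow> int \<Rightarrow> int \<Rightarrow> (int \<times> int \<times> int \<times> int) set" where
  "TC m1 m2 n1 n2 = {(a,b,c,d). 0 \<le> a \<and> 0 \<le> b \<and> 0 \<le> c \<and> 0 \<le> d \<and>
     a \<le> m1 \<and> c \<le> m2 \<and> d \<le> n2 \<and> b \<le> n1 \<and> c + b - a \<le> m2 \<and> d + b - a \<le> m2 \<and>
     a + 2*(c - d) \<le> n1 \<and> b + 2*(c - d) \<le> n1}"

definition TC1 :: "int \<Rightarrow> int \<Rightarrow> int \<Rightarrow> int \<Rightarrow> (int \<times> int \<times> int \<times> int) set" where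
  "TC1 m1 m2 n1 n2 =
     {(a,b,c,d). a = 0 \<and> 0 \<le> b \<and> 0 \<le> c \<and> 0 \<le> d \<and>
        c + b \<le> m2 \<and> d \<le> n2 \<and> b \<le> n1 \<and> d + b \<le> m2 \<and> b + 2*(c - d) \<le> n1}
   \<union> {(a,b,c,d). b = 0 \<and> 0 \<le> c \<and> 0 \<le> d \<and>
        1 \<le> a \<and> a \<le> m1 \<and> c \<le> m2 \<and> d \<le> n2 \<and> d - a \<le> m2 \<and> a + 2*(c - d) \<le> n1}"

definition TC2 :: "int \<Rightarrow> int \<Rightarrow> int \<Rightarrow> int \<Rightarrow> (int \<times> int \<times> int \<times> int) set" where
  "TC2 m1 m2 n1 n2 =
     {(a,b,c,d). a = 0 \<and> c = 0 \<and> 0 \<le> b \<and> 0 \<le> d \<and> d \<le> n2 \<and> b \<le> n1 \<and> d + b \<le> m2}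
   \<union> {(a,b,c,d). b = 0 \<and> c = 0 \<and> 0 \<le> d \<and>
        1 \<le> a \<and> a \<le> m1 \<and> d \<le> n2 \<and> d - a \<le> m2 \<and> a - 2*d \<le> n1}
   \<union> {(a,b,c,d). a = 0 \<and> d = 0 \<and> 0 \<le> b \<and> 1 \<le> c \<and> c + b \<le> m2 \<and> b + 2*c \<le> n1}
   \<union> {(a,b,c,d). b = 0 \<and> d = 0 \<and> 1 \<le> a \<and> a \<le> m1 \<and> 1 \<le> c \<and> c \<le> m2 \<and> a + 2*c \<le> n1}"

end

theory Submission
  imports Defs
begin

lemma image_inv:
  assumes "\<And>x. f (g x) = x" "\<And>y. g (f y) = y"
  shows "f ` Y = {x. g x \<in> Y}"
proof
  show "f ` Y \<subseteq> {x. g x \<in> Y}" using assms by auto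
  show "{x. g x \<in> Y} \<subseteq> f ` Y"
  proof
    fix x assume "x \<in> {x. g x \<in> Y}"
    then have "g x \<in> Y" by simp
    then show "x \<in> f ` Y" using assms(1)[of x] by (metis image_eqI)
  qed
qed

lemma count_lemma:
  assumes fin: "finite X"
    and inv1: "\<And>x. f (g x) = x" and inv2: "\<And>y. g (f y) = y"
    and sub: "{x. g x \<in> Y} \<subseteq> X"
    and C: "X - {x. g x \<in> Y} = C"
  shows "card X = card Y + card C"
proof -
  have im: "f ` Y = {x. g x \<in> Y}" by (rule image_inv[OF inv1 inv2])
  have inj: "inj f" by (metis inv2 injI)
  have "card X = card (f ` Y) + card (X - f ` Y)"
    using fin sub im by (metis card_Diff_subset finite_subset le_add_diff_inverse card_mono)
  also have "card (f ` Y) = card Y" using inj by (simp add: card_image inj_on_subset)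
  finally show ?thesis using C im by simp
qed

lemma card_int_image:
  assumes "inj h"
  shows "card (h ` {lo..hi::int}) = nat (hi - lo + 1)"
  using assms by (simp add: card_image inj_on_subset)

definition Q1 :: "int \<Rightarrow> int \<Rightarrow> int \<Rightarrow> (int \<times> int) set" where
  "Q1 n1 n2 m2 = {(b,d). 0\<le>b \<and> 0\<le>d \<and> d\<le>n2 \<and> b\<le>n1 \<and> d+b\<le>m2}"
definition Q2 :: "int \<Rightarrow> int \<Rightarrow> int \<Rightarrow> int \<Rightarrow> (int \<times> int) set" where
  "Q2 m1 m2 n1 n2 = {(a,d). 1\<le>a \<and> 0\<le>d \<and> a\<le>m1 \<and> d\<le>n2 \<and> d-a\<le>m2 \<and> a-2*d\<le>n1}"
definition Q3 :: "int \<Rightarrow> int \<Rightarrow> (int \<times> int) set" where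
  "Q3 m2 n1 = {(b,c). 0\<le>b \<and> 1\<le>c \<and> c+b\<le>m2 \<and> b+2*c\<le>n1}"
definition Q4 :: "int \<Rightarrow> int \<Rightarrow> int \<Rightarrow> (int \<times> int) set" where
  "Q4 m1 m2 n1 = {(a,c). 1\<le>a \<and> a\<le>m1 \<and> 1\<le>c \<and> c\<le>m2 \<and> a+2*c\<le>n1}"

lemma fin_Q1: "finite (Q1 n1 n2 m2)"
  by (rule finite_subset[of _ "{0..n1} \<times> {0..n2}"]) (auto simp: Q1_def)
lemma fin_Q2: "finite (Q2 m1 m2 n1 n2)"
  by (rule finite_subset[of _ "{1..m1} \<times> {0..n2}"]) (auto simp: Q2_def)
lemma fin_Q3: "finite (Q3 m2 n1)"
  by (rule finite_subset[of _ "{0..n1} \<times> {1..m2}"]) (auto simp: Q3_def)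
lemma fin_Q4: "finite (Q4 m1 m2 n1)"
  by (rule finite_subset[of _ "{1..m1} \<times> {1..m2}"]) (auto simp: Q4_def)

lemma card3:
  assumes "finite A" "finite B" "finite C" "A \<inter> B = {}" "A \<inter> C = {}" "B \<inter> C = {}"
  shows "card (A \<union> B \<union> C) = card A + card B + card C"
  using assms by (simp add: card_Un_disjoint Int_Un_distrib2)

lemma card4:
  assumes "finite A" "finite B" "finite C" "finite D" "A \<inter> B = {}" "A \<inter> C = {}" "B \<inter> C = {}"
    "A \<inter> D = {}" "B \<inter> D = {}" "C \<inter> D = {}"
  shows "card (A \<union> B \<union> C \<union> D) = card A + card B + card C + card D"
  using assms by (simp add: card_Un_disjoint Int_Un_distrib2)

lemma TC2_card:
  "card (TC2 m1 m2 n1 n2) = card (Q1 n1 n2 m2) + card (Q2 m1 m2 n1 n2) + card (Q3 m2 n1) + card (Q4 m1 m2 n1)"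
proof -
  let ?e1 = "\<lambda>(b,d). (0::int,b,0::int,d)"
  let ?e2 = "\<lambda>(a,d). (a,0::int,0::int,d)"
  let ?e3 = "\<lambda>(b,c). (0::int,b,c,0::int)"
  let ?e4 = "\<lambda>(a,c). (a,0::int,c,0::int)"
  have eq: "TC2 m1 m2 n1 n2 = ?e1 ` Q1 n1 n2 m2 \<union> ?e2 ` Q2 m1 m2 n1 n2 \<union> ?e3 ` Q3 m2 n1 \<union> ?e4 ` Q4 m1 m2 n1"
    unfolding TC2_def Q1_def Q2_def Q3_def Q4_def by (auto simp: image_iff)
  have inj: "inj_on ?e1 A" "inj_on ?e2 B" "inj_on ?e3 C" "inj_on ?e4 D" for A B C D
    by (auto simp: inj_on_def)
  show ?thesis
    unfolding eq
    apply (subst card4)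
    using fin_Q1 fin_Q2 fin_Q3 fin_Q4
    apply (auto simp: Q1_def Q2_def Q3_def Q4_def card_image[OF inj(1)] card_image[OF inj(2)]
       card_image[OF inj(3)] card_image[OF inj(4)])
    done
qed


lemma fin_TC: "finite (TC m1 m2 n1 n2)"
  by (rule finite_subset[of _ "{0..m1} \<times> {0..n1} \<times> {0..m2} \<times> {0..n2}"]) (auto simp: TC_def)
lemma fin_TC1: "finite (TC1 m1 m2 n1 n2)"
  by (rule finite_subset[of _ "{0..max 0 m1} \<times> {0..max 0 n1} \<times> {0..max 0 m2} \<times> {0..max 0 n2}"]) (auto simp: TC1_def)
lemma fin_TC2: "finite (TC2 m1 m2 n1 n2)"
  by (rule finite_subset[of _ "{0..max 0 m1} \<times> {0..max 0 n1} \<times> {0..max 0 m2} \<times> {0..max 0 n2}"]) (auto simp: TC2_def)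

lemma s1: "{x. (case x of (a,b,c,d) \<Rightarrow> (a-1,b-1,c,d)) \<in> TC (m1 - 1) m2 (n1 - 1) n2} \<subseteq> TC m1 m2 n1 n2"
  unfolding TC_def by auto
lemma s2: assumes "0 \<le> m1" "0 \<le> n1" shows "{x. (case x of (a,b,c,d) \<Rightarrow> (a,b,c-1,d-1)) \<in> TC1 m1 (m2 - 1) n1 (n2 - 1)} \<subseteq> TC m1 m2 n1 n2"
  using assms unfolding TC_def TC1_def by auto
lemma s3: assumes "0 \<le> m1" "0 \<le> m2" "0 \<le> n1" "0 \<le> n2" shows "TC2 m1 m2 n1 n2 \<subseteq> TC m1 m2 n1 n2"
  using assms unfolding TC_def TC2_def by auto
lemma s4: "TC m1 m2 n1 n2 \<subseteq> {x. (case x of (a,b,c,d) \<Rightarrow> (a-1,b-1,c,d)) \<in> TC (m1 - 1) m2 (n1 - 1) n2}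
   \<union> {x. (case x of (a,b,c,d) \<Rightarrow> (a,b,c-1,d-1)) \<in> TC1 m1 (m2 - 1) n1 (n2 - 1)} \<union> TC2 m1 m2 n1 n2"
proof
  fix x assume x: "x \<in> TC m1 m2 n1 n2"
  obtain a b c d where xe: "x = (a,b,c,d)" by (cases x)
  have h: "0 \<le> a" "0 \<le> b" "0 \<le> c" "0 \<le> d" "a \<le> m1" "c \<le> m2" "d \<le> n2" "b \<le> n1" "c + b - a \<le> m2"
    "d + b - a \<le> m2" "a + 2*(c - d) \<le> n1" "b + 2*(c - d) \<le> n1" using x unfolding xe TC_def by auto
  show "x \<in> {x. (case x of (a,b,c,d) \<Rightarrow> (a-1,b-1,c,d)) \<in> TC (m1 - 1) m2 (n1 - 1) n2}
   \<union> {x. (case x of (a,b,c,d) \<Rightarrow> (a,b,c-1,d-1)) \<in> TC1 m1 (m2 - 1) n1 (n2 - 1)} \<union> TC2 m1 m2 n1 n2"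
  proof (cases "1 \<le> a \<and> 1 \<le> b")
    case True
    then have "(a-1,b-1,c,d) \<in> TC (m1 - 1) m2 (n1 - 1) n2" using h unfolding TC_def by simp
    then show ?thesis unfolding xe by simp
  next
    case F: False
    show ?thesis
    proof (cases "1 \<le> c \<and> 1 \<le> d")
      case True
      show ?thesis
      proof (cases "a = 0")
        case True
        then have "(a,b,c-1,d-1) \<in> TC1 m1 (m2 - 1) n1 (n2 - 1)" using h \<open>1 \<le> c \<and> 1 \<le> d\<close> unfolding TC1_def by simp
        then show ?thesis unfolding xe by simp
      next
        case False
        then have "b = 0" "1 \<le> a" using F h by auto
        then have "(a,b,c-1,d-1) \<in> TC1 m1 (m2 - 1) n1 (n2 - 1)" using h \<open>1 \<le> c \<and> 1 \<le> d\<close> unfolding TC1_def by simp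
        then show ?thesis unfolding xe by simp
      qed
    next
      case G: False
      have "x \<in> TC2 m1 m2 n1 n2"
      proof (cases "a = 0")
        case True
        show ?thesis
        proof (cases "c = 0")
          case True
          then show ?thesis using h \<open>a = 0\<close> unfolding xe TC2_def by simp
        next
          case False
          then have "d = 0" using G h by auto
          then show ?thesis using h \<open>a = 0\<close> False unfolding xe TC2_def by simp
        qed
      next
        case False
        then have "b = 0" "1 \<le> a" using F h by auto
        show ?thesis
        proof (cases "c = 0")
          case True
          then show ?thesis using h \<open>b = 0\<close> \<open>1 \<le> a\<close> unfolding xe TC2_def by simp
        next
          case False
          then have "d = 0" using G h by auto
          then show ?thesis using h \<open>b = 0\<close> \<open>1 \<le> a\<close> False unfolding xe TC2_def by simp
        qed
      qed
      then show ?thesis by simp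
    qed
  qed
qed
lemma d1: "{x. (case x of (a,b,c,d) \<Rightarrow> (a-1,b-1,c,d)) \<in> TC (m1 - 1) m2 (n1 - 1) n2} \<inter> {x. (case x of (a,b,c,d) \<Rightarrow> (a,b,c-1,d-1)) \<in> TC1 m1 (m2 - 1) n1 (n2 - 1)} = {}"
    unfolding TC_def TC1_def by auto
lemma d2: "{x. (case x of (a,b,c,d) \<Rightarrow> (a-1,b-1,c,d)) \<in> TC (m1 - 1) m2 (n1 - 1) n2} \<inter> TC2 m1 m2 n1 n2 = {}"
    unfolding TC_def TC2_def by auto
lemma d3: "{x. (case x of (a,b,c,d) \<Rightarrow> (a,b,c-1,d-1)) \<in> TC1 m1 (m2 - 1) n1 (n2 - 1)} \<inter> TC2 m1 m2 n1 n2 = {}"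
    unfolding TC1_def TC2_def by auto

lemma part1:
  assumes "0 \<le> m1" "0 \<le> m2" "0 \<le> n1" "0 \<le> n2"
  shows "card (TC m1 m2 n1 n2) =
           card (TC (m1 - 1) m2 (n1 - 1) n2) + card (TC1 m1 (m2 - 1) n1 (n2 - 1))
           + card (TC2 m1 m2 n1 n2)"
proof -
  let ?f1 = "\<lambda>(a::int,b::int,c::int,d::int). (a+1,b+1,c,d)"
  let ?g1 = "\<lambda>(a::int,b::int,c::int,d::int). (a-1,b-1,c,d)"
  let ?f2 = "\<lambda>(a::int,b::int,c::int,d::int). (a,b,c+1,d+1)"
  let ?g2 = "\<lambda>(a::int,b::int,c::int,d::int). (a,b,c-1,d-1)"
  let ?S1 = "{x. ?g1 x \<in> TC (m1 - 1) m2 (n1 - 1) n2}"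
  let ?S2 = "{x. ?g2 x \<in> TC1 m1 (m2 - 1) n1 (n2 - 1)}"
  have im1: "?f1 ` TC (m1 - 1) m2 (n1 - 1) n2 = ?S1"
    by (rule image_inv) auto
  have im2: "?f2 ` TC1 m1 (m2 - 1) n1 (n2 - 1) = ?S2"
    by (rule image_inv) auto
  have inj1: "inj ?f1" by (auto simp: inj_on_def)
  have inj2: "inj ?f2" by (auto simp: inj_on_def)
  have eq: "TC m1 m2 n1 n2 = ?S1 \<union> ?S2 \<union> TC2 m1 m2 n1 n2"
    by (intro subset_antisym s4 Un_least s1 s2[OF assms(1) assms(3)] s3[OF assms])
  have f1: "finite ?S1" by (rule finite_subset[OF s1 fin_TC])
  have f2: "finite ?S2" by (rule finite_subset[OF s2[OF assms(1) assms(3)] fin_TC])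
  have "card (TC m1 m2 n1 n2) = card ?S1 + card ?S2 + card (TC2 m1 m2 n1 n2)"
    unfolding eq by (rule card3[OF f1 f2 fin_TC2 d1 d2 d3])
  also have "card ?S1 = card (TC (m1 - 1) m2 (n1 - 1) n2)"
    unfolding im1[symmetric] by (rule card_image[OF inj_on_subset[OF inj1]]) simp
  also have "card ?S2 = card (TC1 m1 (m2 - 1) n1 (n2 - 1))"
    unfolding im2[symmetric] by (rule card_image[OF inj_on_subset[OF inj2]]) simp
  finally show ?thesis .
qed

lemma image_inv2:
  assumes "\<And>y. k (h y) = y"
  shows "h ` I = {x. k x \<in> I \<and> h (k x) = x}"
proof
  show "h ` I \<subseteq> {x. k x \<in> I \<and> h (k x) = x}" using assms by auto
  show "{x. k x \<in> I \<and> h (k x) = x} \<subseteq> h ` I" by (auto, metis image_eqI)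
qed

lemma card_two:
  assumes "inj h1" "inj h2" "h1 ` {lo1..hi1::int} \<inter> h2 ` {lo2..hi2::int} = {}"
  shows "card (h1 ` {lo1..hi1} \<union> h2 ` {lo2..hi2}) = nat (hi1 - lo1 + 1) + nat (hi2 - lo2 + 1)"
  using assms by (simp add: card_Un_disjoint card_int_image)

lemma p2q1:
  assumes "0 \<le> n1" "1 \<le> s" "1 \<le> t"
  shows "card (Q1 n1 t s) = card (Q1 n1 (t-1) (s-1)) + nat (min n1 s + 1)"
proof -
  have im: "(\<lambda>b. (b,0::int)) ` {0..min n1 s} = {x. fst x \<in> {0..min n1 s} \<and> (fst x, 0) = x}"
    by (rule image_inv2) auto
  have "card (Q1 n1 t s) = card (Q1 n1 (t-1) (s-1)) + card ((\<lambda>b. (b,0::int)) ` {0..min n1 s})"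
  proof (rule count_lemma[where f="\<lambda>(b,d). (b,d+1)" and g="\<lambda>(b,d). (b,d-1)"])
    show "finite (Q1 n1 t s)" by (rule fin_Q1)
  qed (use assms in \<open>auto simp: im Q1_def\<close>)
  then show ?thesis by (simp add: card_int_image inj_on_def)
qed

lemma p2q2:
  assumes "0 \<le> n1" "1 \<le> s" "1 \<le> t"
  shows "card (Q2 m1 s n1 t) = card (Q2 m1 (s-1) n1 (t-1))
     + nat (min m1 (n1+2*t) - max 1 (t-s) + 1) + nat (min m1 (t-s-1) - 1 + 1)"
proof -
  have im1: "(\<lambda>a. (a,t)) ` {max 1 (t-s)..min m1 (n1+2*t)} = {x. fst x \<in> {max 1 (t-s)..min m1 (n1+2*t)} \<and> (fst x, t) = x}"
    by (rule image_inv2) auto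
  have im2: "(\<lambda>a. (a,a+s)) ` {1..min m1 (t-s-1)} = {x. fst x \<in> {1..min m1 (t-s-1)} \<and> (fst x, fst x + s) = x}"
    by (rule image_inv2) auto
  have "card (Q2 m1 s n1 t) = card (Q2 m1 (s-1) n1 (t-1)) + card ((\<lambda>a. (a,t)) ` {max 1 (t-s)..min m1 (n1+2*t)} \<union> (\<lambda>a. (a,a+s)) ` {1..min m1 (t-s-1)})"
  proof (rule count_lemma[where f="\<lambda>x. x" and g="\<lambda>x. x"])
    show "finite (Q2 m1 s n1 t)" by (rule fin_Q2)
  qed (use assms in \<open>auto simp: im1 im2 Q2_def\<close>)
  also have "\<dots> = card (Q2 m1 (s-1) n1 (t-1)) + (nat (min m1 (n1+2*t) - max 1 (t-s) + 1) + nat (min m1 (t-s-1) - 1 + 1))"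
    by (subst card_two) (auto simp: inj_on_def)
  finally show ?thesis by simp
qed

lemma p2q3:
  assumes "0 \<le> n1" "1 \<le> s"
  shows "card (Q3 s n1) = card (Q3 (s-1) n1) + nat (min s (n1-s) - 1 + 1)"
proof -
  have im: "(\<lambda>c. (s-c,c)) ` {1..min s (n1-s)} = {x. snd x \<in> {1..min s (n1-s)} \<and> (s - snd x, snd x) = x}"
    by (rule image_inv2) auto
  have "card (Q3 s n1) = card (Q3 (s-1) n1) + card ((\<lambda>c. (s-c,c)) ` {1..min s (n1-s)})"
  proof (rule count_lemma[where f="\<lambda>x. x" and g="\<lambda>x. x"])
    show "finite (Q3 s n1)" by (rule fin_Q3)
  qed (use assms in \<open>auto simp: im Q3_def\<close>)
  then show ?thesis by (simp add: card_int_image inj_on_def)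
qed

lemma p2q4:
  assumes "0 \<le> n1" "1 \<le> s"
  shows "card (Q4 m1 s n1) = card (Q4 m1 (s-1) n1) + nat (min m1 (n1-2*s) - 1 + 1)"
proof -
  have im: "(\<lambda>a. (a,s)) ` {1..min m1 (n1-2*s)} = {x. fst x \<in> {1..min m1 (n1-2*s)} \<and> (fst x, s) = x}"
    by (rule image_inv2) auto
  have "card (Q4 m1 s n1) = card (Q4 m1 (s-1) n1) + card ((\<lambda>a. (a,s)) ` {1..min m1 (n1-2*s)})"
  proof (rule count_lemma[where f="\<lambda>x. x" and g="\<lambda>x. x"])
    show "finite (Q4 m1 s n1)" by (rule fin_Q4)
  qed (use assms in \<open>auto simp: im Q4_def\<close>)
  then show ?thesis by (simp add: card_int_image inj_on_def)
qed


lemma le_div2: "((c::int) \<le> n div 2) \<longleftrightarrow> 2*c \<le> n" by presburger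

lemma p3q1:
  assumes "1 \<le> n1"
  shows "card (Q1 n1 n2 m2) = card (Q1 (n1-1) n2 m2) + nat (min n2 (m2-n1) + 1)"
proof -
  have im: "(\<lambda>d. (n1,d)) ` {0..min n2 (m2-n1)} = {x. snd x \<in> {0..min n2 (m2-n1)} \<and> (n1, snd x) = x}"
    by (rule image_inv2) auto
  have "card (Q1 n1 n2 m2) = card (Q1 (n1-1) n2 m2) + card ((\<lambda>d. (n1,d)) ` {0..min n2 (m2-n1)})"
  proof (rule count_lemma[where f="\<lambda>x. x" and g="\<lambda>x. x"])
    show "finite (Q1 n1 n2 m2)" by (rule fin_Q1)
  qed (use assms in \<open>auto simp: im Q1_def\<close>)
  then show ?thesis by (simp add: card_int_image inj_on_def)
qed

lemma p3q2:
  assumes "1 \<le> n1" "0 \<le> m2" "1 \<le> m1"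
  shows "card (Q2 m1 m2 n1 n2) = card (Q2 (m1-1) m2 (n1-1) n2)
     + nat (min n2 (m2+1) - 0 + 1) + nat (min m1 (n2-m2) - 2 + 1)"
proof -
  have im1: "(\<lambda>d. (1::int,d)) ` {0..min n2 (m2+1)} = {x. snd x \<in> {0..min n2 (m2+1)} \<and> (1, snd x) = x}"
    by (rule image_inv2) auto
  have im2: "(\<lambda>a. (a,a+m2)) ` {2..min m1 (n2-m2)} = {x. fst x \<in> {2..min m1 (n2-m2)} \<and> (fst x, fst x + m2) = x}"
    by (rule image_inv2) auto
  have "card (Q2 m1 m2 n1 n2) = card (Q2 (m1-1) m2 (n1-1) n2) + card ((\<lambda>d. (1::int,d)) ` {0..min n2 (m2+1)} \<union> (\<lambda>a. (a,a+m2)) ` {2..min m1 (n2-m2)})"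
  proof (rule count_lemma[where f="\<lambda>(a,d). (a+1,d)" and g="\<lambda>(a,d). (a-1,d)"])
    show "finite (Q2 m1 m2 n1 n2)" by (rule fin_Q2)
  qed (use assms in \<open>auto simp: im1 im2 Q2_def\<close>)
  also have "\<dots> = card (Q2 (m1-1) m2 (n1-1) n2) + (nat (min n2 (m2+1) - 0 + 1) + nat (min m1 (n2-m2) - 2 + 1))"
    by (subst card_two) (auto simp: inj_on_def)
  finally show ?thesis by simp
qed

lemma p3q3:
  assumes "1 \<le> n1"
  shows "card (Q3 m2 n1) = card (Q3 m2 (n1-1)) + nat (n1 div 2 - max 1 (n1-m2) + 1)"
proof -
  have im: "(\<lambda>c. (n1-2*c,c)) ` {max 1 (n1-m2)..n1 div 2} = {x. snd x \<in> {max 1 (n1-m2)..n1 div 2} \<and> (n1 - 2 * snd x, snd x) = x}"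
    by (rule image_inv2) auto
  have "card (Q3 m2 n1) = card (Q3 m2 (n1-1)) + card ((\<lambda>c. (n1-2*c,c)) ` {max 1 (n1-m2)..n1 div 2})"
  proof (rule count_lemma[where f="\<lambda>x. x" and g="\<lambda>x. x"])
    show "finite (Q3 m2 n1)" by (rule fin_Q3)
  qed (use assms in \<open>auto simp: im Q3_def le_div2\<close>)
  then show ?thesis by (simp add: card_int_image inj_on_def)
qed

lemma p3q4:
  assumes "1 \<le> n1" "1 \<le> m1"
  shows "card (Q4 m1 m2 n1) = card (Q4 (m1-1) m2 (n1-1)) + nat (min m2 ((n1-1) div 2) - 1 + 1)"
proof -
  have im: "(\<lambda>c. (1::int,c)) ` {1..min m2 ((n1-1) div 2)} = {x. snd x \<in> {1..min m2 ((n1-1) div 2)} \<and> (1, snd x) = x}"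
    by (rule image_inv2) auto
  have "card (Q4 m1 m2 n1) = card (Q4 (m1-1) m2 (n1-1)) + card ((\<lambda>c. (1::int,c)) ` {1..min m2 ((n1-1) div 2)})"
  proof (rule count_lemma[where f="\<lambda>(a,c). (a+1,c)" and g="\<lambda>(a,c). (a-1,c)"])
    show "finite (Q4 m1 m2 n1)" by (rule fin_Q4)
  qed (use assms in \<open>auto simp: im Q4_def le_div2\<close>)
  then show ?thesis by (simp add: card_int_image inj_on_def)
qed

lemma ar2:
  fixes m1 s n1 t :: int
  assumes "0 \<le> m1" "0 \<le> n1" "1 \<le> s" "1 \<le> t"
  shows "max 0 (min n1 s + 1) + max 0 (min m1 (n1+2*t) - max 1 (t-s) + 1) + max 0 (min m1 (t-s-1) - 1 + 1)
     + max 0 (min s (n1-s) - 1 + 1) + max 0 (min m1 (n1-2*s) - 1 + 1)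
     = min (min (2*(m1 + s)) (2*(n1 + t))) (m1 + n1) + 1"
  using assms
  by (cases "n1 \<le> s"; cases "m1 \<le> n1+2*t"; cases "1 \<le> t-s"; cases "m1 \<le> t-s-1"; cases "s \<le> n1-s"; cases "m1 \<le> n1-2*s";
      simp add: min_def max_def)
lemma ar3k:
  fixes m1 m2 n1 n2 k1 k2 :: int
  assumes "0 \<le> m2" "0 \<le> n2" "1 \<le> m1" "1 \<le> n1" "m2 = 0 \<or> n2 = 0"
    "(n1 = 2*k1 \<and> k2 = k1 - 1) \<or> (n1 = 2*k1+1 \<and> k2 = k1)"
  shows "max 0 (min n2 (m2-n1) + 1) + max 0 (min n2 (m2+1) - 0 + 1) + max 0 (min m1 (n2-m2) - 2 + 1)
     + max 0 (k1 - max 1 (n1-m2) + 1) + max 0 (min m2 k2 - 1 + 1)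
     = min n1 m2 + min m1 n2 + 1"
proof (cases "m2 = 0")
  case True
  then show ?thesis using assms
    by (cases "n2 \<le> 1"; cases "m1 \<le> n2"; cases "n1 = 2*k1"; simp add: min_def max_def)
next
  case False
  then have "n2 = 0" using assms by simp
  then show ?thesis using assms False
    by (cases "n1 = 2*k1"; cases "n1 \<le> m2"; cases "m2 \<le> k2"; simp add: min_def max_def)
qed

lemma par_lemma: "((n1::int) = 2*(n1 div 2) \<and> (n1-1) div 2 = n1 div 2 - 1) \<or> (n1 = 2*(n1 div 2)+1 \<and> (n1-1) div 2 = n1 div 2)"
proof (cases "even n1")
  case True
  then obtain k where h: "n1 = 2*k" by auto
  have "2*k - 1 = 2*(k-1)+1" by simp
  then have "(n1-1) div 2 = k - 1" using h by simp
  then show ?thesis using h by simp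
next
  case False
  then obtain k where h: "n1 = 2*k+1" using oddE by blast
  then show ?thesis by simp
qed

lemma comb2:
  fixes X Y q1 q2 q3 q4 r1 r2 r3 r4 x1 x2 x3 x4 x5 M :: int
  assumes "X = q1+q2+q3+q4" "Y = r1+r2+r3+r4" "q1 = r1 + x1" "q2 = r2 + x2 + x3" "q3 = r3 + x4" "q4 = r4 + x5"
    "x1+x2+x3+x4+x5 = M + 1"
  shows "X = Y + M + 1"
  using assms by linarith

lemma comb3:
  fixes X Y q1 q2 q3 q4 r1 r2 r3 r4 x1 x2 x3 x4 x5 M N :: int
  assumes "X = q1+q2+q3+q4" "Y = r1+r2+r3+r4" "q1 = r1 + x1" "q2 = r2 + x2 + x3" "q3 = r3 + x4" "q4 = r4 + x5"
    "x1+x2+x3+x4+x5 = M + N + 1"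
  shows "X = Y + M + N + 1"
  using assms by linarith

lemma int_nat_max: "int (nat z) = max 0 z" by simp

theorem lemma5p2:
  fixes m1 m2 n1 n2 :: int
  assumes "0 \<le> m1" "0 \<le> m2" "0 \<le> n1" "0 \<le> n2"
  shows "card (TC m1 m2 n1 n2) =
           card (TC (m1 - 1) m2 (n1 - 1) n2) + card (TC1 m1 (m2 - 1) n1 (n2 - 1))
           + card (TC2 m1 m2 n1 n2)
       \<and> (min m2 n2 > 0 \<longrightarrow>
           int (card (TC2 m1 m2 n1 n2)) = int (card (TC2 m1 (m2 - 1) n1 (n2 - 1)))
             + min (min (2*(m1 + m2)) (2*(n1 + n2))) (m1 + n1) + 1)
       \<and> (min m2 n2 = 0 \<longrightarrow> min m1 n1 > 0 \<longrightarrow>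
           int (card (TC2 m1 m2 n1 n2)) = int (card (TC2 (m1 - 1) m2 (n1 - 1) n2))
             + min n1 m2 + min m1 n2 + 1)"
proof (intro conjI impI)
  show "card (TC m1 m2 n1 n2) =
           card (TC (m1 - 1) m2 (n1 - 1) n2) + card (TC1 m1 (m2 - 1) n1 (n2 - 1))
           + card (TC2 m1 m2 n1 n2)" by (rule part1[OF assms])
next
  assume "min m2 n2 > 0"
  then have s: "1 \<le> m2" and t: "1 \<le> n2" by auto
  have A: "int (card (TC2 m1 m2 n1 n2)) = int (card (Q1 n1 n2 m2)) + int (card (Q2 m1 m2 n1 n2)) + int (card (Q3 m2 n1)) + int (card (Q4 m1 m2 n1))"
    by (simp only: TC2_card of_nat_add)
  have B: "int (card (TC2 m1 (m2-1) n1 (n2-1))) = int (card (Q1 n1 (n2-1) (m2-1))) + int (card (Q2 m1 (m2-1) n1 (n2-1))) + int (card (Q3 (m2-1) n1)) + int (card (Q4 m1 (m2-1) n1))"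
    by (simp only: TC2_card of_nat_add)
  have c1: "int (card (Q1 n1 n2 m2)) = int (card (Q1 n1 (n2-1) (m2-1))) + max 0 (min n1 m2 + 1)"
    by (simp only: p2q1[OF assms(3) s t] of_nat_add int_nat_max)
  have c2: "int (card (Q2 m1 m2 n1 n2)) = int (card (Q2 m1 (m2-1) n1 (n2-1))) + max 0 (min m1 (n1+2*n2) - max 1 (n2-m2) + 1) + max 0 (min m1 (n2-m2-1) - 1 + 1)"
    by (simp only: p2q2[OF assms(3) s t] of_nat_add int_nat_max)
  have c3: "int (card (Q3 m2 n1)) = int (card (Q3 (m2-1) n1)) + max 0 (min m2 (n1-m2) - 1 + 1)"
    by (simp only: p2q3[OF assms(3) s] of_nat_add int_nat_max)
  have c4: "int (card (Q4 m1 m2 n1)) = int (card (Q4 m1 (m2-1) n1)) + max 0 (min m1 (n1-2*m2) - 1 + 1)"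
    by (simp only: p2q4[OF assms(3) s] of_nat_add int_nat_max)
  show "int (card (TC2 m1 m2 n1 n2)) = int (card (TC2 m1 (m2 - 1) n1 (n2 - 1)))
             + min (min (2*(m1 + m2)) (2*(n1 + n2))) (m1 + n1) + 1"
    by (rule comb2[OF A B c1 c2 c3 c4 ar2[OF assms(1) assms(3) s t]])
next
  assume z: "min m2 n2 = 0" and p: "min m1 n1 > 0"
  then have m: "1 \<le> m1" and n: "1 \<le> n1" by auto
  have A: "int (card (TC2 m1 m2 n1 n2)) = int (card (Q1 n1 n2 m2)) + int (card (Q2 m1 m2 n1 n2)) + int (card (Q3 m2 n1)) + int (card (Q4 m1 m2 n1))"
    by (simp only: TC2_card of_nat_add)
  have B: "int (card (TC2 (m1-1) m2 (n1-1) n2)) = int (card (Q1 (n1-1) n2 m2)) + int (card (Q2 (m1-1) m2 (n1-1) n2)) + int (card (Q3 m2 (n1-1))) + int (card (Q4 (m1-1) m2 (n1-1)))"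
    by (simp only: TC2_card of_nat_add)
  have c1: "int (card (Q1 n1 n2 m2)) = int (card (Q1 (n1-1) n2 m2)) + max 0 (min n2 (m2-n1) + 1)"
    by (simp only: p3q1[OF n] of_nat_add int_nat_max)
  have c2: "int (card (Q2 m1 m2 n1 n2)) = int (card (Q2 (m1-1) m2 (n1-1) n2)) + max 0 (min n2 (m2+1) - 0 + 1) + max 0 (min m1 (n2-m2) - 2 + 1)"
    by (simp only: p3q2[OF n assms(2) m] of_nat_add int_nat_max)
  have c3: "int (card (Q3 m2 n1)) = int (card (Q3 m2 (n1-1))) + max 0 (n1 div 2 - max 1 (n1-m2) + 1)"
    by (simp only: p3q3[OF n] of_nat_add int_nat_max)
  have c4: "int (card (Q4 m1 m2 n1)) = int (card (Q4 (m1-1) m2 (n1-1))) + max 0 (min m2 ((n1-1) div 2) - 1 + 1)"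
    by (simp only: p3q4[OF n m] of_nat_add int_nat_max)
  have par: "(n1 = 2*(n1 div 2) \<and> (n1-1) div 2 = n1 div 2 - 1) \<or> (n1 = 2*(n1 div 2)+1 \<and> (n1-1) div 2 = n1 div 2)"
    by (rule par_lemma)
  have zz: "m2 = 0 \<or> n2 = 0" using z by linarith
  show "int (card (TC2 m1 m2 n1 n2)) = int (card (TC2 (m1 - 1) m2 (n1 - 1) n2))
             + min n1 m2 + min m1 n2 + 1"
    by (rule comb3[OF A B c1 c2 c3 c4 ar3k[OF assms(2) assms(4) m n zz par]])
qed

end
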